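(* Let $d\ge2$, $H=\sum_{k=0}^{d-1}h_k|k\rangle\langle k|$ Hermitian on $\mathbb{C}^d$, $\rho_0$ a density matrix and $U_\tau$ a unitary on $\mathbb{C}^d$. For the cyclic process $H_0=H_\tau=H$, $$\big|\langle w_\tau^2\rangle_{\mathrm{MH}}-\langle w_\tau^2\rangle_{\mathrm{TPM}}\big|\le \frac{C_{l_1}(\rho_0)}{2}\Big(\mathrm{Tr}\,H^2+2\max_k|h_k|\,\mathrm{Tr}|H|\Big).$$ Moreover, if $d=2$ then $\langle w_\tau^2\rangle_{\mathrm{MH}}=\langle w_\tau^2\rangle_{\mathrm{TPM}}$ for every qubit state $\rho_0$, every $2\times2$ unitary $U_\tau$ and every $H$.
   Context: Setting: cyclic process with Hamiltonian $H$ (eigenbasis $\{|n\rangle\}$, $\Pi_n=|n\rangle\langle n|$) and unitary $U_\tau$. The TPM joint probability is $P^{\mathrm{TPM}}(m,n)=\mathrm{Tr}[\Pi_m U_\tau \Pi_n\rho_0\Pi_n U_\tau^\dagger \Pi_m]$ and the Margenau–Hill quasiprobability is $P^{\mathrm{MH}}(m,n)=\mathrm{Re}\,\mathrm{Tr}[U_\tau^\dagger \Pi_m U_\tau \Pi_n \rho_0]$; moments are $\langle w_\tau^k\rangle_{\mathcal O}=\sum_{m,n}P^{\mathcal O}(m,n)(h_m-h_n)^k$. Equivalently $\langle w_\tau^2\rangle_{\mathrm{TPM}}=\mathrm{Tr}[\Delta(\rho_0)(U_\tau^\dagger HU_\tau-H)^2]$ and $\langle w_\tau^2\rangle_{\mathrm{MH}}=\mathrm{Tr}[\rho_0(U_\tau^\dagger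 HU_\tau-H)^2]$, with $\Delta(\rho)=\sum_n\Pi_n\rho\Pi_n$. $C_{l_1}(\rho)=\sum_{i\ne j}|\langle i|\rho|j\rangle|$ is the $l_1$-coherence in the basis $\{|k\rangle\}$; $\mathrm{Tr}|H|=\sum_k|h_k|$. *)

theory Defs
  imports "Jordan_Normal_Form.Matrix"
begin

definition mtrace :: "complex mat \<Rightarrow> complex" where
  "mtrace A = (\<Sum>i<dim_row A. A $$ (i,i))"

definition dag :: "complex mat \<Rightarrow> complex mat" where
  "dag A = mat (dim_col A) (dim_row A) (\<lambda>(i,j). cnj (A $$ (j,i)))"

definition unitary_mat :: "nat \<Rightarrow> complex mat \<Rightarrow> bool" where
  "unitary_mat d U \<longleftrightarrow> U \<in> carrier_mat d d \<and> U * dag U = 1\<^sub>m d \<and> dag U * U = 1\<^sub>m d"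

definition density_mat :: "nat \<Rightarrow> complex mat \<Rightarrow> bool" where
  "density_mat d \<rho> \<longleftrightarrow> \<rho> \<in> carrier_mat d d \<and> dag \<rho> = \<rho> \<and> mtrace \<rho> = 1 \<and>
     (\<forall>v \<in> carrier_vec d.
        let q = (\<Sum>i<d. \<Sum>j<d. cnj (v $ i) * \<rho> $$ (i,j) * v $ j) in Im q = 0 \<and> Re q \<ge> 0)"

definition hamil :: "nat \<Rightarrow> (nat \<Rightarrow> real) \<Rightarrow> complex mat" where
  "hamil d h = mat d d (\<lambda>(i,j). if i = j then complex_of_real (h i) else 0)"

definition proj :: "nat \<Rightarrow> nat \<Rightarrow> complex mat" where
  "proj d n = mat d d (\<lambda>(i,j). if i = n \<and> j = n then 1 else 0)"

definition P_TPM :: "nat \<Rightarrow> complex mat \<Rightarrow> complex mat \<Rightarrow> nat \<Rightarrow> nat \<Rightarrow> real" where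
  "P_TPM d U \<rho> m n = Re (mtrace (proj d m * U * proj d n * \<rho> * proj d n * dag U * proj d m))"

definition P_MH :: "nat \<Rightarrow> complex mat \<Rightarrow> complex mat \<Rightarrow> nat \<Rightarrow> nat \<Rightarrow> real" where
  "P_MH d U \<rho> m n = Re (mtrace (dag U * proj d m * U * proj d n * \<rho>))"

definition w2_TPM :: "nat \<Rightarrow> (nat \<Rightarrow> real) \<Rightarrow> complex mat \<Rightarrow> complex mat \<Rightarrow> real" where
  "w2_TPM d h U \<rho> = (\<Sum>m<d. \<Sum>n<d. P_TPM d U \<rho> m n * (h m - h n)^2)"

definition w2_MH :: "nat \<Rightarrow> (nat \<Rightarrow> real) \<Rightarrow> complex mat \<Rightarrow> complex mat \<Rightarrow> real" where
  "w2_MH d h U \<rho> = (\<Sum>m<d. \<Sum>n<d. P_MH d U \<rho> m n * (h m - h n)^2)"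

definition C_l1 :: "nat \<Rightarrow> complex mat \<Rightarrow> real" where
  "C_l1 d \<rho> = (\<Sum>i<d. \<Sum>j\<in>{..<d} - {i}. cmod (\<rho> $$ (i,j)))"

definition trH2 :: "nat \<Rightarrow> (nat \<Rightarrow> real) \<Rightarrow> real" where
  "trH2 d h = Re (mtrace (hamil d h * hamil d h))"

definition trAbsH :: "nat \<Rightarrow> (nat \<Rightarrow> real) \<Rightarrow> real" where
  "trAbsH d h = (\<Sum>k<d. \<bar>h k\<bar>)"

end

theory Submission
  imports Defs
begin

lemma idx_mult:
  assumes "A \<in> carrier_mat d d" "B \<in> carrier_mat d d" "i<d" "j<d"
  shows "(A*B)$$(i,j) = (\<Sum>k<d. A$$(i,k)*B$$(k,j))"
  using assms by (simp add: scalar_prod_def lessThan_atLeast0)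

lemma mc[simp]: "A \<in> carrier_mat d d \<Longrightarrow> B \<in> carrier_mat d d \<Longrightarrow> A * B \<in> carrier_mat d d"
  by (rule mult_carrier_mat)

lemma dimp[simp]: "dim_row (proj d n) = d" "dim_row (dag A) = dim_col A" by (simp_all add: proj_def dag_def)

lemma proj_c[simp]: "proj d n \<in> carrier_mat d d" by (simp add: proj_def)
lemma dag_c[simp]: "A \<in> carrier_mat d d \<Longrightarrow> dag A \<in> carrier_mat d d" by (simp add: dag_def)
lemma proj_idx[simp]: "i<d \<Longrightarrow> j<d \<Longrightarrow> proj d n $$ (i,j) = (if i = n \<and> j = n then 1 else 0)"
  by (simp add: proj_def)
lemma dag_idx[simp]: "A \<in> carrier_mat d d \<Longrightarrow> i<d \<Longrightarrow> j<d \<Longrightarrow> dag A $$ (i,j) = cnj (A$$(j,i))"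
  by (simp add: dag_def)

lemma trace_MH:
  assumes U: "U \<in> carrier_mat d d" and r: "\<rho> \<in> carrier_mat d d" and "m<d" "n<d"
  shows "mtrace (dag U * proj d m * U * proj d n * \<rho>) = (\<Sum>i<d. cnj (U$$(m,i)) * U$$(m,n) * \<rho>$$(n,i))"
proof -
  have c1: "dag U * proj d m \<in> carrier_mat d d" using U by simp
  have e1: "(dag U * proj d m)$$(i,k) = (if k = m then cnj(U$$(m,i)) else 0)" if "i<d" "k<d" for i k
    using that assms by (simp add: idx_mult[of _ d] if_distrib[of "\<lambda>x. x * _"] if_distrib[of "\<lambda>x. _ * x"] del: index_mult_mat(1) cong: if_cong)
  have c2: "dag U * proj d m * U \<in> carrier_mat d d" using U by simp
  have e2: "(dag U * proj d m * U)$$(i,j) = cnj(U$$(m,i)) * U$$(m,j)" if "i<d" "j<d" for i j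
    using that assms by (simp add: idx_mult[OF c1 U] e1 if_distrib[of "\<lambda>x. x * _"] if_distrib[of "\<lambda>x. _ * x"] del: index_mult_mat(1) cong: if_cong)
  have c3: "dag U * proj d m * U * proj d n \<in> carrier_mat d d" using U by simp
  have e3: "(dag U * proj d m * U * proj d n)$$(i,j) = (if j = n then cnj(U$$(m,i)) * U$$(m,n) else 0)" if "i<d" "j<d" for i j
    using that assms by (simp add: idx_mult[OF c2 proj_c] e2 if_distrib[of "\<lambda>x. x * _"] if_distrib[of "\<lambda>x. _ * x"] del: index_mult_mat(1) cong: if_cong)
  have e4: "(dag U * proj d m * U * proj d n * \<rho>)$$(i,i) = cnj (U$$(m,i)) * U$$(m,n) * \<rho>$$(n,i)" if "i<d" for i
    using that assms by (simp add: idx_mult[OF c3 r] e3 if_distrib[of "\<lambda>x. x * _"] if_distrib[of "\<lambda>x. _ * x"] del: index_mult_mat(1) cong: if_cong)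
  show ?thesis using U by (simp add: mtrace_def e4)
qed

lemma trace_TPM:
  assumes U: "U \<in> carrier_mat d d" and r: "\<rho> \<in> carrier_mat d d" and "m<d" "n<d"
  shows "mtrace (proj d m * U * proj d n * \<rho> * proj d n * dag U * proj d m) = U$$(m,n) * \<rho>$$(n,n) * cnj (U$$(m,n))"
proof -
  have c1: "proj d m * U \<in> carrier_mat d d" using U by simp
  have e1: "(proj d m * U)$$(i,k) = (if i = m then U$$(m,k) else 0)" if "i<d" "k<d" for i k
    using that assms by (simp add: idx_mult[of _ d] if_distrib[of "\<lambda>x. x * _"] if_distrib[of "\<lambda>x. _ * x"] del: index_mult_mat(1) cong: if_cong)
  have c2: "proj d m * U * proj d n \<in> carrier_mat d d" using U by simp
  have e2: "(proj d m * U * proj d n)$$(i,j) = (if i = m \<and> j = n then U$$(m,n) else 0)" if "i<d" "j<d" for i j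
    using that assms by (simp add: idx_mult[OF c1 proj_c] e1 if_distrib[of "\<lambda>x. x * _"] if_distrib[of "\<lambda>x. _ * x"] del: index_mult_mat(1) cong: if_cong)
  have c3: "proj d m * U * proj d n * \<rho> \<in> carrier_mat d d" using U r by simp
  have e3: "(proj d m * U * proj d n * \<rho>)$$(i,j) = (if i = m then U$$(m,n) * \<rho>$$(n,j) else 0)" if "i<d" "j<d" for i j
    using that assms by (simp add: idx_mult[OF c2 r] e2 if_distrib[of "\<lambda>x. x * _"] if_distrib[of "\<lambda>x. _ * x"] del: index_mult_mat(1) cong: if_cong)
  have c4: "proj d m * U * proj d n * \<rho> * proj d n \<in> carrier_mat d d" using U r by simp
  have e4: "(proj d m * U * proj d n * \<rho> * proj d n)$$(i,j) = (if i = m \<and> j = n then U$$(m,n) * \<rho>$$(n,n) else 0)" if "i<d" "j<d" for i j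
    using that assms by (simp add: idx_mult[OF c3 proj_c] e3 if_distrib[of "\<lambda>x. x * _"] if_distrib[of "\<lambda>x. _ * x"] del: index_mult_mat(1) cong: if_cong)
  have c5: "proj d m * U * proj d n * \<rho> * proj d n * dag U \<in> carrier_mat d d" using U r by simp
  have e5: "(proj d m * U * proj d n * \<rho> * proj d n * dag U)$$(i,j) = (if i = m then U$$(m,n) * \<rho>$$(n,n) * cnj (U$$(j,n)) else 0)" if "i<d" "j<d" for i j
    using that assms by (simp add: idx_mult[OF c4 dag_c[OF U]] e4 if_distrib[of "\<lambda>x. x * _"] if_distrib[of "\<lambda>x. _ * x"] del: index_mult_mat(1) cong: if_cong)
  have e6: "(proj d m * U * proj d n * \<rho> * proj d n * dag U * proj d m)$$(i,i) = (if i = m then U$$(m,n) * \<rho>$$(n,n) * cnj (U$$(m,n)) else 0)" if "i<d" for i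
    using that assms by (simp add: idx_mult[OF c5 proj_c] e5 if_distrib[of "\<lambda>x. x * _"] if_distrib[of "\<lambda>x. _ * x"] del: index_mult_mat(1) cong: if_cong)
  show ?thesis using U assms by (simp add: mtrace_def e6)
qed

lemma trH2_eq: "trH2 d h = (\<Sum>k<d. (h k)^2)"
proof -
  have c: "hamil d h \<in> carrier_mat d d" by (simp add: hamil_def)
  have hi: "hamil d h $$ (i,j) = (if i = j then complex_of_real (h i) else 0)" if "i<d" "j<d" for i j
    using that by (simp add: hamil_def)
  have "(hamil d h * hamil d h)$$(i,i) = complex_of_real ((h i)^2)" if "i<d" for i
    using that by (simp add: idx_mult[OF c c] hi if_distrib[of "\<lambda>x. x * _"] power2_eq_square del: index_mult_mat(1) cong: if_cong)
  moreover have "dim_row (hamil d h * hamil d h) = d" by (simp add: hamil_def)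
  ultimately show ?thesis unfolding trH2_def mtrace_def by simp
qed

lemma Re_sum': "Re (\<Sum>i\<in>A. f i) = (\<Sum>i\<in>A. Re (f i))" by (rule Re_sum)

theorem theorem2:
  fixes d :: nat and h :: "nat \<Rightarrow> real" and \<rho> U :: "complex mat"
  assumes "d \<ge> 2" and "density_mat d \<rho>" and "unitary_mat d U"
  shows "\<bar>w2_MH d h U \<rho> - w2_TPM d h U \<rho>\<bar>
           \<le> C_l1 d \<rho> / 2 * (trH2 d h + 2 * Max {\<bar>h k\<bar> | k. k < d} * trAbsH d h)
         \<and> (d = 2 \<longrightarrow> w2_MH d h U \<rho> = w2_TPM d h U \<rho>)"
proof -
  have U: "U \<in> carrier_mat d d" and UU: "U * dag U = 1\<^sub>m d" and UU2: "dag U * U = 1\<^sub>m d"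
    using assms(3) by (auto simp: unitary_mat_def)
  have r: "\<rho> \<in> carrier_mat d d" and rh: "dag \<rho> = \<rho>" using assms(2) by (auto simp: density_mat_def)
  have herm: "\<rho>$$(i,j) = cnj (\<rho>$$(j,i))" if "i<d" "j<d" for i j
  proof -
    have "\<rho>$$(i,j) = dag \<rho> $$ (i,j)" using rh by simp
    also have "\<dots> = cnj (\<rho>$$(j,i))" using that r by simp
    finally show ?thesis .
  qed
  have orth: "(\<Sum>m<d. cnj (U$$(m,j)) * U$$(m,n)) = 0" if "j<d" "n<d" "j\<noteq>n" for j n
  proof -
    have "(dag U * U)$$(j,n) = 0" using UU2 that by simp
    thus ?thesis using that U by (simp add: idx_mult[OF dag_c[OF U] U] del: index_mult_mat(1))
  qed
  have rownorm: "(\<Sum>k<d. (cmod (U$$(m,k)))^2) = 1" if "m<d" for m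
  proof -
    have "(U * dag U)$$(m,m) = 1" using UU that by simp
    hence "(\<Sum>k<d. U$$(m,k) * cnj (U$$(m,k))) = 1" using that U by (simp add: idx_mult[OF U dag_c[OF U]] del: index_mult_mat(1))
    hence "(\<Sum>k<d. complex_of_real ((cmod (U$$(m,k)))^2)) = 1" by (simp only: complex_norm_square)
    hence "complex_of_real (\<Sum>k<d. (cmod (U$$(m,k)))^2) = 1" by simp
    thus ?thesis using of_real_eq_1_iff by blast
  qed
  have prod_half: "cmod (U$$(m,n)) * cmod (U$$(m,j)) \<le> 1/2" if "m<d" "n<d" "j<d" "j\<noteq>n" for m n j
  proof -
    have "(\<Sum>k\<in>{n,j}. (cmod (U$$(m,k)))^2) \<le> (\<Sum>k<d. (cmod (U$$(m,k)))^2)"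
      by (rule sum_mono2) (use that in auto)
    hence "(cmod (U$$(m,n)))^2 + (cmod (U$$(m,j)))^2 \<le> 1" using rownorm[OF that(1)] that by simp
    moreover have "0 \<le> (cmod (U$$(m,n)) - cmod (U$$(m,j)))^2" by simp
    ultimately show ?thesis by (simp add: power2_diff)
  qed
  define t where "t m n j = U$$(m,n) * \<rho>$$(n,j) * cnj (U$$(m,j))" for m n j
  define S where "S n = {..<d} - {n}" for n :: nat
  have diffP: "P_MH d U \<rho> m n - P_TPM d U \<rho> m n = (\<Sum>j\<in>S n. Re (t m n j))" if "m<d" "n<d" for m n
  proof -
    have "P_MH d U \<rho> m n = (\<Sum>j<d. Re (t m n j))"
      unfolding P_MH_def trace_MH[OF U r that] Re_sum t_def by (simp add: algebra_simps)
    also have "\<dots> = Re (t m n n) + (\<Sum>j\<in>S n. Re (t m n j))"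
      unfolding S_def using that by (simp add: sum.remove[of "{..<d}" n])
    finally show ?thesis unfolding P_TPM_def trace_TPM[OF U r that] t_def by simp
  qed
  define D where "D = (\<Sum>n<d. \<Sum>j\<in>S n. \<Sum>m<d. (h m - h n)^2 * Re (t m n j))"
  have DD: "w2_MH d h U \<rho> - w2_TPM d h U \<rho> = D"
  proof -
    have "w2_MH d h U \<rho> - w2_TPM d h U \<rho> = (\<Sum>m<d. \<Sum>n<d. (h m - h n)^2 * (\<Sum>j\<in>S n. Re (t m n j)))"
      unfolding w2_MH_def w2_TPM_def sum_subtractf[symmetric]
      by (intro sum.cong refl) (simp add: diffP[symmetric] algebra_simps)
    also have "\<dots> = (\<Sum>n<d. \<Sum>m<d. \<Sum>j\<in>S n. (h m - h n)^2 * Re (t m n j))"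
      by (subst sum.swap) (simp add: sum_distrib_left)
    also have "\<dots> = D" unfolding D_def by (intro sum.cong refl sum.swap)
    finally show ?thesis .
  qed
  define M where "M = Max {\<bar>h k\<bar> | k. k < d}"
  have hM: "\<bar>h k\<bar> \<le> M" if "k<d" for k
  proof -
    have "{\<bar>h k\<bar> | k. k < d} = (\<lambda>k. \<bar>h k\<bar>) ` {..<d}" by auto
    hence "finite {\<bar>h k\<bar> | k. k < d}" by simp
    thus ?thesis unfolding M_def using that by (intro Max_ge) auto
  qed
  define K where "K = (\<Sum>m<d. (h m)^2 + 2 * \<bar>h m\<bar> * M)"
  have KK: "K = trH2 d h + 2 * M * trAbsH d h"
    unfolding K_def trH2_eq trAbsH_def by (simp add: sum.distrib sum_distrib_left algebra_simps)
  have inner: "(\<Sum>m<d. (h m - h n)^2 * Re (t m n j)) = (\<Sum>m<d. ((h m)^2 - 2 * h m * h n) * Re (t m n j))"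
    if "n<d" "j\<in>S n" for n j
  proof -
    have jd: "j<d" "j\<noteq>n" using that unfolding S_def by auto
    have "(\<Sum>m<d. t m n j) = \<rho>$$(n,j) * (\<Sum>m<d. cnj (U$$(m,j)) * U$$(m,n))"
      unfolding t_def sum_distrib_left by (intro sum.cong refl) (simp add: algebra_simps)
    also have "\<dots> = 0" using orth[OF jd(1) that(1) jd(2)] by simp
    finally have z: "(\<Sum>m<d. Re (t m n j)) = 0" by (metis Re_sum zero_complex.simps(1))
    have "(\<Sum>m<d. (h m - h n)^2 * Re (t m n j)) = (\<Sum>m<d. ((h m)^2 - 2 * h m * h n) * Re (t m n j)) + (h n)^2 * (\<Sum>m<d. Re (t m n j))"
      by (simp add: sum_distrib_left sum.distrib[symmetric] power2_diff algebra_simps)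
    thus ?thesis using z by simp
  qed
  have innerb: "\<bar>\<Sum>m<d. (h m - h n)^2 * Re (t m n j)\<bar> \<le> cmod (\<rho>$$(n,j)) / 2 * K"
    if "n<d" "j\<in>S n" for n j
  proof -
    have jd: "j<d" "j\<noteq>n" using that unfolding S_def by auto
    have "\<bar>\<Sum>m<d. ((h m)^2 - 2 * h m * h n) * Re (t m n j)\<bar> \<le> (\<Sum>m<d. \<bar>((h m)^2 - 2 * h m * h n) * Re (t m n j)\<bar>)"
      by (rule sum_abs)
    also have "\<dots> \<le> (\<Sum>m<d. ((h m)^2 + 2 * \<bar>h m\<bar> * M) * (cmod (\<rho>$$(n,j)) / 2))"
    proof (rule sum_mono)
      fix m assume "m \<in> {..<d}"
      hence md: "m<d" by simp
      have a1: "\<bar>(h m)^2 - 2 * h m * h n\<bar> \<le> (h m)^2 + 2 * \<bar>h m\<bar> * M"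
      proof -
        have "\<bar>h m * h n\<bar> \<le> \<bar>h m\<bar> * M" using hM[OF that(1)] by (simp add: abs_mult mult_left_mono)
        moreover have "\<bar>(h m)^2 - 2 * h m * h n\<bar> \<le> \<bar>(h m)^2\<bar> + \<bar>2 * h m * h n\<bar>" by (rule abs_triangle_ineq4)
        moreover have "\<bar>2 * h m * h n\<bar> = 2 * \<bar>h m * h n\<bar>" by (simp add: abs_mult)
        ultimately show ?thesis by simp
      qed
      have "\<bar>Re (t m n j)\<bar> \<le> cmod (t m n j)" by (rule abs_Re_le_cmod)
      also have "\<dots> = cmod (\<rho>$$(n,j)) * (cmod (U$$(m,n)) * cmod (U$$(m,j)))"
        unfolding t_def by (simp add: norm_mult)
      also have "\<dots> \<le> cmod (\<rho>$$(n,j)) * (1/2)"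
        by (rule mult_left_mono[OF prod_half[OF md that(1) jd]]) simp
      finally have a2: "\<bar>Re (t m n j)\<bar> \<le> cmod (\<rho>$$(n,j)) / 2" by simp
      show "\<bar>((h m)^2 - 2 * h m * h n) * Re (t m n j)\<bar> \<le> ((h m)^2 + 2 * \<bar>h m\<bar> * M) * (cmod (\<rho>$$(n,j)) / 2)"
        unfolding abs_mult by (rule mult_mono[OF a1 a2]) (use hM[OF md] in \<open>auto intro!: add_nonneg_nonneg mult_nonneg_nonneg\<close>)
    qed
    also have "\<dots> = cmod (\<rho>$$(n,j)) / 2 * K" unfolding K_def sum_distrib_right[symmetric] by (simp only: mult.commute)
    finally show ?thesis using inner[OF that] by simp
  qed
  have part1: "\<bar>D\<bar> \<le> C_l1 d \<rho> / 2 * K"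
  proof -
    have "\<bar>D\<bar> \<le> (\<Sum>n<d. \<Sum>j\<in>S n. \<bar>\<Sum>m<d. (h m - h n)^2 * Re (t m n j)\<bar>)"
      unfolding D_def by (rule order.trans[OF sum_abs sum_mono[OF sum_abs]])
    also have "\<dots> \<le> (\<Sum>n<d. \<Sum>j\<in>S n. cmod (\<rho>$$(n,j)) / 2 * K)"
      by (intro sum_mono innerb) auto
    also have "\<dots> = C_l1 d \<rho> / 2 * K"
      unfolding C_l1_def S_def by (simp add: sum_distrib_right sum_divide_distrib)
    finally show ?thesis .
  qed
  have part2: "D = 0" if d2: "d = 2"
  proof -
    have L: "{..<d} = {0,1::nat}" using d2 by auto
    have S0: "S 0 = {1}" and S1: "S 1 = {0}" unfolding S_def L by auto
    have o: "cnj (U$$(0,0)) * U$$(0,1) + cnj (U$$(1,0)) * U$$(1,1) = 0"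
      using orth[of 0 1] d2 L by simp
    have hr: "\<rho>$$(1,0) = cnj (\<rho>$$(0,1))" using herm[of 1 0] d2 by simp
    have "Re (t 1 0 1) + Re (t 0 1 0) = Re (\<rho>$$(0,1) * cnj (cnj (U$$(0,0)) * U$$(0,1) + cnj (U$$(1,0)) * U$$(1,1)))"
    proof -
      have "Re (t 0 1 0) = Re (cnj (t 0 1 0))" by simp
      also have "cnj (t 0 1 0) = \<rho>$$(0,1) * cnj (U$$(0,1)) * U$$(0,0)" unfolding t_def hr by simp
      finally show ?thesis unfolding t_def by (simp add: algebra_simps)
    qed
    also have "\<dots> = 0" using o by simp
    finally have z: "Re (t 1 0 1) + Re (t 0 1 0) = 0" .
    have "D = (h 1 - h 0)^2 * Re (t 1 0 1) + (h 0 - h 1)^2 * Re (t 0 1 0)"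
      unfolding D_def L using S0 S1 L by simp
    also have "\<dots> = (h 1 - h 0)^2 * (Re (t 1 0 1) + Re (t 0 1 0))" by (simp add: power2_commute algebra_simps)
    finally show ?thesis using z by simp
  qed
  show ?thesis
  proof
    show "\<bar>w2_MH d h U \<rho> - w2_TPM d h U \<rho>\<bar> \<le> C_l1 d \<rho> / 2 * (trH2 d h + 2 * Max {\<bar>h k\<bar> | k. k < d} * trAbsH d h)"
      using part1 DD KK M_def by simp
    show "d = 2 \<longrightarrow> w2_MH d h U \<rho> = w2_TPM d h U \<rho>"
      using part2 DD by auto
  qed
qed

end
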